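(* $\Sigma_\iota[\lambda]\subseteq\mathrm{Im}(\Psi^\lambda_\iota)$, where $\Sigma_\iota[\lambda]=\{\mathbf x\in\mathbb Z_\iota(\lambda)\mid\varphi(\mathbf x)\ge0\text{ for all }\varphi\in\Xi_\iota[\lambda]\}$.
   Context: Let $a_1,a_2\in\mathbb Z_{\ge1}$ with $a_1a_2>4$, $A=\begin{pmatrix}2&-a_1\\-a_2&2\end{pmatrix}$, $\mathfrak g=\mathfrak g(A)$ with simple roots $\alpha_1,\alpha_2$, fundamental weights $\Lambda_1,\Lambda_2$. For $k\in\mathbb Z$, $i_k=1$ if $k$ odd, $i_k=2$ if $k$ even. $\mathbb Z^{+\infty}_{\ge0}$ (sequences $(\dots,x_2,x_1)$ of nonnegative integers, almost all zero) and $\mathbb Z^{-\infty}_{\le0}$ (sequences $(x_0,x_{-1},\dots)$ of nonpositive integers, almost all zero) carry the Nakashima–Zelevinsky crystal structures for $(\dots,i_2,i_1)$ and $(i_0,i_{-1},\dots)$; $\Psi^+:\mathcal B(\infty)\hookrightarrow\mathbb Z^{+\infty}_{\ge0}$ and $\Psi^-:\mathcal B(-\infty)\hookrightarrow\mathbb Z^{-\infty}_{\le0}$ are the corresponding crystal embeddings of the crystal bases of $U_q^-(\mathfrak g)$, $U_q^+(\mathfrak g)$ (sending highest/lowest elements to zero sequences). For $\mu$ in the weight lattice, $\mathbb Z_\iota(\mu)=\mathbb Z^{+\infty}_{\ge0}\otimes\mathcal T_\mu\otimes\mathbb Z^{-\infty}_{\le0}$ with elements $\mathbf x=(\dots,x_2,x_1)\otimes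 t_\mu\otimes(x_0,x_{-1},\dots)$, and $\mathrm{Im}(\Psi^\mu_\iota)=\mathrm{Im}(\Psi^+)\otimes t_\mu\otimes\mathrm{Im}(\Psi^-)$. Put $\alpha=\frac{a_1a_2+\sqrt{a_1^2a_2^2-4a_1a_2}}{2a_2}$, $\beta=\frac{a_1a_2+\sqrt{a_1^2a_2^2-4a_1a_2}}{2a_1}$, $\gamma_k=\alpha$ ($k$ even), $\beta$ ($k$ odd). Fix $\lambda=k_1\Lambda_1-k_2\Lambda_2$, $k_1,k_2\in\mathbb Z_{>0}$, with: if $a_1,a_2\ge2$, $k_2\le k_1<(a_1-1)k_2$ or $k_1<k_2\le(a_2-1)k_1$; if $a_1=1$, $2k_1\le k_2\le(a_2-2)k_1$; if $a_2=1$, $2k_2\le k_1\le(a_1-2)k_2$. Let $p_0=k_2$, $p_1=k_1$, $p_{m+2}=a_2p_{m+1}-p_m$ ($m\ge0$ even), $p_{m+2}=a_1p_{m+1}-p_m$ ($m\ge0$ odd), and for $m<0$: $p_m=a_2p_{m+1}-p_{m+2}$ ($m$ even), $p_m=a_1p_{m+1}-p_{m+2}$ ($m$ odd). With $\zeta_k(\mathbf x)=x_k$, let $\Xi_\iota[\lambda]=\{\gamma_0p_0+\gamma_0\zeta_0-\zeta_1,\ \gamma_1p_1+\zeta_0-\gamma_1\zeta_1\}\cup\{p_k-\zeta_k,\ \gamma_k\zeta_k-\zeta_{k+1},\ \gamma_{k+1}p_{k+1}-p_k+\zeta_k-\gamma_{k+1}\zeta_{k+1}\mid k\ge1\}\cup\{p_k+\zeta_k,\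 \zeta_{k-1}-\gamma_k\zeta_k,\ \gamma_{k-1}p_{k-1}-p_k+\gamma_{k-1}\zeta_{k-1}-\zeta_k\mid k\le0\}$. *)

theory Defs
  imports Complex_Main
begin

text \<open>Cartan matrix A = (2, -a1; -a2, 2); cartan i j = <h_i, alpha_j>.\<close>
definition cartan :: "int \<Rightarrow> int \<Rightarrow> nat \<Rightarrow> nat \<Rightarrow> int" where
  "cartan a1 a2 i j = (if i = j then 2 else if i = 1 then - a1 else - a2)"

definition ik :: "int \<Rightarrow> nat" where
  "ik k = (if odd k then 1 else 2)"

section \<open>Nakashima--Zelevinsky crystal on Z^{+infinity}_{>=0} for (..., i_2, i_1)\<close>

text \<open>Sequences are encoded as functions int => int; on the plus side only the
  entries with index k >= 1 matter.\<close>

definition sig_plus :: "int \<Rightarrow> int \<Rightarrow> (int \<Rightarrow> int) \<Rightarrow> int \<Rightarrow> int" where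
  "sig_plus a1 a2 x k = x k + (\<Sum>j\<in>{j. k < j \<and> x j \<noteq> 0}. cartan a1 a2 (ik k) (ik j) * x j)"

definition sigmax_plus :: "int \<Rightarrow> int \<Rightarrow> nat \<Rightarrow> (int \<Rightarrow> int) \<Rightarrow> int" where
  "sigmax_plus a1 a2 i x = Max ((sig_plus a1 a2 x) ` {k. 1 \<le> k \<and> ik k = i})"

definition ftil_plus :: "int \<Rightarrow> int \<Rightarrow> nat \<Rightarrow> (int \<Rightarrow> int) \<Rightarrow> (int \<Rightarrow> int)" where
  "ftil_plus a1 a2 i x =
     (let m = (LEAST k. 1 \<le> k \<and> ik k = i \<and> sig_plus a1 a2 x k = sigmax_plus a1 a2 i x)
      in x(m := x m + 1))"

text \<open>Image of Psi^+ : B(infinity) -> Z^{+infinity}: generated by the f-tilde's from 0.\<close>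
inductive_set ImPsi_plus :: "int \<Rightarrow> int \<Rightarrow> (int \<Rightarrow> int) set" for a1 a2 where
  zero: "(\<lambda>_. 0) \<in> ImPsi_plus a1 a2"
| step: "x \<in> ImPsi_plus a1 a2 \<Longrightarrow> i \<in> {1, 2} \<Longrightarrow> ftil_plus a1 a2 i x \<in> ImPsi_plus a1 a2"

definition sig_minus :: "int \<Rightarrow> int \<Rightarrow> (int \<Rightarrow> int) \<Rightarrow> int \<Rightarrow> int" where
  "sig_minus a1 a2 x k = - x k - (\<Sum>j\<in>{j. j < k \<and> x j \<noteq> 0}. cartan a1 a2 (ik k) (ik j) * x j)"

definition sigmax_minus :: "int \<Rightarrow> int \<Rightarrow> nat \<Rightarrow> (int \<Rightarrow> int) \<Rightarrow> int" where
  "sigmax_minus a1 a2 i x = Max ((sig_minus a1 a2 x) ` {k. k \<le> 0 \<and> ik k = i})"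

definition etil_minus :: "int \<Rightarrow> int \<Rightarrow> nat \<Rightarrow> (int \<Rightarrow> int) \<Rightarrow> (int \<Rightarrow> int)" where
  "etil_minus a1 a2 i x =
     (let m = (GREATEST k. k \<le> 0 \<and> ik k = i \<and> sig_minus a1 a2 x k = sigmax_minus a1 a2 i x)
      in x(m := x m - 1))"

text \<open>Image of Psi^- : B(-infinity) -> Z^{-infinity}: generated by the e-tilde's from 0.\<close>
inductive_set ImPsi_minus :: "int \<Rightarrow> int \<Rightarrow> (int \<Rightarrow> int) set" for a1 a2 where
  zero: "(\<lambda>_. 0) \<in> ImPsi_minus a1 a2"
| step: "x \<in> ImPsi_minus a1 a2 \<Longrightarrow> i \<in> {1, 2} \<Longrightarrow> etil_minus a1 a2 i x \<in> ImPsi_minus a1 a2"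

text \<open>An element (..., x_2, x_1) (x) t_lambda (x) (x_0, x_{-1}, ...) is encoded as one
  function x :: int => int with finite support, x_k >= 0 for k >= 1 and x_k <= 0 for k <= 0.\<close>
definition Zlam :: "(int \<Rightarrow> int) set" where
  "Zlam = {x. finite {k. x k \<noteq> 0} \<and> (\<forall>k\<ge>1. 0 \<le> x k) \<and> (\<forall>k\<le>0. x k \<le> 0)}"

definition ImPsi_lam :: "int \<Rightarrow> int \<Rightarrow> (int \<Rightarrow> int) set" where
  "ImPsi_lam a1 a2 = {x \<in> Zlam.
      (\<lambda>k. if 1 \<le> k then x k else 0) \<in> ImPsi_plus a1 a2 \<and>
      (\<lambda>k. if k \<le> 0 then x k else 0) \<in> ImPsi_minus a1 a2}"

fun pf :: "int \<Rightarrow> int \<Rightarrow> int \<Rightarrow> int \<Rightarrow> nat \<Rightarrow> int" where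
  "pf a1 a2 k1 k2 0 = k2"
| "pf a1 a2 k1 k2 (Suc 0) = k1"
| "pf a1 a2 k1 k2 (Suc (Suc n)) =
     (if even n then a2 else a1) * pf a1 a2 k1 k2 (Suc n) - pf a1 a2 k1 k2 n"

text \<open>pb n = p_{1-n}.\<close>
fun pb :: "int \<Rightarrow> int \<Rightarrow> int \<Rightarrow> int \<Rightarrow> nat \<Rightarrow> int" where
  "pb a1 a2 k1 k2 0 = k1"
| "pb a1 a2 k1 k2 (Suc 0) = k2"
| "pb a1 a2 k1 k2 (Suc (Suc n)) =
     (if odd n then a2 else a1) * pb a1 a2 k1 k2 (Suc n) - pb a1 a2 k1 k2 n"

definition pp :: "int \<Rightarrow> int \<Rightarrow> int \<Rightarrow> int \<Rightarrow> int \<Rightarrow> int" where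
  "pp a1 a2 k1 k2 m = (if 0 \<le> m then pf a1 a2 k1 k2 (nat m) else pb a1 a2 k1 k2 (nat (1 - m)))"

definition alpha :: "int \<Rightarrow> int \<Rightarrow> real" where
  "alpha a1 a2 = (a1 * a2 + sqrt (a1\<^sup>2 * a2\<^sup>2 - 4 * a1 * a2)) / (2 * a2)"

definition beta :: "int \<Rightarrow> int \<Rightarrow> real" where
  "beta a1 a2 = (a1 * a2 + sqrt (a1\<^sup>2 * a2\<^sup>2 - 4 * a1 * a2)) / (2 * a1)"

definition gam :: "int \<Rightarrow> int \<Rightarrow> int \<Rightarrow> real" where
  "gam a1 a2 k = (if even k then alpha a1 a2 else beta a1 a2)"

definition Xi :: "int \<Rightarrow> int \<Rightarrow> int \<Rightarrow> int \<Rightarrow> ((int \<Rightarrow> int) \<Rightarrow> real) set" where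
  "Xi a1 a2 k1 k2 =
    (let p = (\<lambda>m. real_of_int (pp a1 a2 k1 k2 m)); g = gam a1 a2 in
     {\<lambda>x. g 0 * p 0 + g 0 * x 0 - x 1, \<lambda>x. g 1 * p 1 + x 0 - g 1 * x 1}
     \<union> {\<lambda>x. p k - x k | k. 1 \<le> k}
     \<union> {\<lambda>x. g k * x k - x (k + 1) | k. 1 \<le> k}
     \<union> {\<lambda>x. g (k + 1) * p (k + 1) - p k + x k - g (k + 1) * x (k + 1) | k. 1 \<le> k}
     \<union> {\<lambda>x. p k + x k | k. k \<le> 0}
     \<union> {\<lambda>x. x (k - 1) - g k * x k | k. k \<le> 0}
     \<union> {\<lambda>x. g (k - 1) * p (k - 1) - p k + g (k - 1) * x (k - 1) - x k | k. k \<le> 0})"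

definition Sigma_lam :: "int \<Rightarrow> int \<Rightarrow> int \<Rightarrow> int \<Rightarrow> (int \<Rightarrow> int) set" where
  "Sigma_lam a1 a2 k1 k2 = {x \<in> Zlam. \<forall>\<phi>\<in>Xi a1 a2 k1 k2. 0 \<le> \<phi> x}"

end

theory Submission imports Defs begin
lemma ab_id:
  assumes "1 \<le> a1" "1 \<le> a2" "a1*a2 > 4"
  shows "beta a1 a2 * (a1 - alpha a1 a2) = 1 \<and> alpha a1 a2 * (a2 - beta a1 a2) = 1 \<and> alpha a1 a2 > 0 \<and> beta a1 a2 > 0"
proof -
  define A where "A = real_of_int a1"
  define B where "B = real_of_int a2"
  have A: "A \<ge> 1" "B \<ge> 1" "A*B > 4" using assms unfolding A_def B_def
    by (simp_all, metis of_int_less_iff of_int_mult of_int_numeral)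
  define r where "r = sqrt (A^2*B^2 - 4*A*B)"
  have pos: "A^2*B^2 - 4*A*B \<ge> 0"
  proof -
    have "A^2*B^2 - 4*A*B = (A*B)*(A*B-4)" by (simp add: power2_eq_square algebra_simps)
    also have "\<dots> \<ge> 0" using A by simp
    finally show ?thesis .
  qed
  have r2: "r^2 = A^2*B^2 - 4*A*B" unfolding r_def using pos by simp
  have r0: "r \<ge> 0" unfolding r_def using pos by simp
  have al: "alpha a1 a2 = (A*B + r)/(2*B)" unfolding alpha_def A_def B_def r_def by simp
  have be: "beta a1 a2 = (A*B + r)/(2*A)" unfolding beta_def A_def B_def r_def by simp
  have s2: "(A*B+r)^2 = 2*A*B*(A*B+r-2)" using r2 by (simp add: power2_eq_square algebra_simps)
  have "beta a1 a2 * (a1 - alpha a1 a2) = 1"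
    unfolding be al A_def[symmetric] using A s2 by (simp add: field_simps power2_eq_square)
  moreover have "alpha a1 a2 * (a2 - beta a1 a2) = 1"
    unfolding be al B_def[symmetric] using A s2 by (simp add: field_simps power2_eq_square)
  moreover have "alpha a1 a2 > 0" "beta a1 a2 > 0" unfolding al be using A r0 by auto
  ultimately show ?thesis by simp
qed

lemma ik_cases: "ik k = 1 \<or> ik k = 2" by (simp add: ik_def)
lemma ik_plus2[simp]: "ik (k+2) = ik k" by (simp add: ik_def)
lemma ik_minus2[simp]: "ik (k-2) = ik k" by (simp add: ik_def)
lemma ik_plus1: "ik (k+1) \<noteq> ik k" by (simp add: ik_def)
lemma ik_minus1: "ik (k-1) \<noteq> ik k" by (simp add: ik_def)
lemma cartan_diag[simp]: "cartan a1 a2 i i = 2" by (simp add: cartan_def)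

lemma gam_id:
  assumes "1 \<le> a1" "1 \<le> a2" "a1*a2 > 4" "ik k \<noteq> ik k'"
  shows "gam a1 a2 k * (- real_of_int (cartan a1 a2 (ik k) (ik k')) - gam a1 a2 k') = 1"
    and "gam a1 a2 k > 0"
  using ab_id[OF assms(1-3)] assms(4)
  by (auto simp: gam_def ik_def cartan_def split: if_splits)

lemma gam_pos: assumes "1 \<le> a1" "1 \<le> a2" "a1*a2 > 4" shows "gam a1 a2 k > 0"
  using ab_id[OF assms(1-3)] by (simp add: gam_def)

lemma sig_plus_fin:
  assumes "finite S" "{j. x j \<noteq> 0} \<subseteq> S"
  shows "sig_plus a1 a2 x k = x k + (\<Sum>j\<in>{j\<in>S. k < j}. cartan a1 a2 (ik k) (ik j) * x j)"
  unfolding sig_plus_def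
  by (rule arg_cong[where f="\<lambda>s. x k + s"], rule sum.mono_neutral_left) (use assms in auto)

lemma sig_plus_rec:
  assumes "finite {j. x j \<noteq> 0}"
  shows "sig_plus a1 a2 x k = x k + cartan a1 a2 (ik k) (ik (k+1)) * x (k+1) + x (k+2) + sig_plus a1 a2 x (k+2)"
proof -
  define S where "S = {j. x j \<noteq> 0} \<union> {k+1, k+2}"
  have fS: "finite S" "{j. x j \<noteq> 0} \<subseteq> S" using assms by (auto simp: S_def)
  have split: "{j\<in>S. k < j} = {k+1, k+2} \<union> {j\<in>S. k+2 < j}" by (auto simp: S_def)
  have "(\<Sum>j\<in>{j\<in>S. k < j}. cartan a1 a2 (ik k) (ik j) * x j)
     = (\<Sum>j\<in>{k+1, k+2}. cartan a1 a2 (ik k) (ik j) * x j) + (\<Sum>j\<in>{j\<in>S. k+2 < j}. cartan a1 a2 (ik k) (ik j) * x j)"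
    unfolding split by (rule sum.union_disjoint) (use fS in auto)
  also have "(\<Sum>j\<in>{k+1, k+2}. cartan a1 a2 (ik k) (ik j) * x j) = cartan a1 a2 (ik k) (ik (k+1)) * x (k+1) + 2 * x (k+2)"
    by simp
  finally show ?thesis
    unfolding sig_plus_fin[OF fS, of a1 a2 k] sig_plus_fin[OF fS, of a1 a2 "k+2"] by simp
qed

lemma sig_plus_upd:
  assumes "finite {j. x j \<noteq> 0}"
  shows "sig_plus a1 a2 (x(m := x m + d)) k = sig_plus a1 a2 x k +
    (if k = m then d else if k < m then cartan a1 a2 (ik k) (ik m) * d else 0)"
proof -
  define S where "S = {j. x j \<noteq> 0} \<union> {m}"
  have fS: "finite S" "{j. x j \<noteq> 0} \<subseteq> S" using assms by (auto simp: S_def)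
  have fS': "{j. (x(m := x m + d)) j \<noteq> 0} \<subseteq> S" by (auto simp: S_def)
  have eq: "(\<Sum>j\<in>{j\<in>S. k < j}. cartan a1 a2 (ik k) (ik j) * (x(m := x m + d)) j)
    = (\<Sum>j\<in>{j\<in>S. k < j}. cartan a1 a2 (ik k) (ik j) * x j)
      + (\<Sum>j\<in>{j\<in>S. k < j}. if j = m then cartan a1 a2 (ik k) (ik m) * d else 0)"
    by (subst sum.distrib[symmetric], rule sum.cong) (auto simp: algebra_simps)
  have "(\<Sum>j\<in>{j\<in>S. k < j}. if j = m then cartan a1 a2 (ik k) (ik m) * d else 0)
      = (if k < m then cartan a1 a2 (ik k) (ik m) * d else 0)"
    using fS by (subst sum.delta) (auto simp: S_def)
  then show ?thesis
    unfolding sig_plus_fin[OF fS(1) fS', of a1 a2 k] sig_plus_fin[OF fS, of a1 a2 k] eq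
    by auto
qed

lemma sig_plus_zero:
  assumes "\<forall>j. k \<le> j \<longrightarrow> x j = 0"
  shows "sig_plus a1 a2 x k = 0"
proof -
  have "{j. k < j \<and> x j \<noteq> 0} = {}" using assms by auto
  then show ?thesis using assms unfolding sig_plus_def by simp
qed

lemma sig_plus_img_fin:
  assumes "finite {j. x j \<noteq> 0}"
  shows "finite (sig_plus a1 a2 x ` {k. 1 \<le> k \<and> ik k = i})"
proof -
  define N where "N = Max ({j. x j \<noteq> 0} \<union> {1})"
  have N: "\<forall>j. N < j \<longrightarrow> x j = 0"
    using assms Max_ge[of "{j. x j \<noteq> 0} \<union> {1}"] unfolding N_def by force
  have "sig_plus a1 a2 x ` {k. 1 \<le> k \<and> ik k = i} \<subseteq> sig_plus a1 a2 x ` {1..N} \<union> {0}"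
  proof
    fix s assume "s \<in> sig_plus a1 a2 x ` {k. 1 \<le> k \<and> ik k = i}"
    then obtain k where k: "1 \<le> k" "s = sig_plus a1 a2 x k" by auto
    show "s \<in> sig_plus a1 a2 x ` {1..N} \<union> {0}"
    proof (cases "k \<le> N")
      case True then show ?thesis using k by auto
    next
      case False then have "sig_plus a1 a2 x k = 0" using N by (intro sig_plus_zero) auto
      then show ?thesis using k by auto
    qed
  qed
  then show ?thesis by (rule finite_subset) auto
qed


lemma plus_main:
  assumes ab: "1 \<le> a1" "1 \<le> a2" "a1*a2 > 4"
  shows "finite {j. x j \<noteq> 0} \<Longrightarrow> (\<forall>j. x j \<noteq> 0 \<longrightarrow> 1 \<le> j) \<Longrightarrow> (\<forall>j. 0 \<le> x j) \<Longrightarrow>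
    (\<forall>k\<ge>1. real_of_int (x (k+1)) \<le> gam a1 a2 k * x k) \<Longrightarrow> x \<in> ImPsi_plus a1 a2"
proof (induction "nat (sum x {j. x j \<noteq> 0})" arbitrary: x rule: less_induct)
  case less
  note fin = less.prems(1) and supp = less.prems(2) and nn = less.prems(3) and gc = less.prems(4)
  define Sx where "Sx = {j. x j \<noteq> 0}"
  show ?case
  proof (cases "Sx = {}")
    case True
    then have "x = (\<lambda>_. 0)" unfolding Sx_def by auto
    then show ?thesis using ImPsi_plus.zero by simp
  next
    case False
    define n where "n = Max Sx"
    have nS: "n \<in> Sx" using False fin unfolding n_def Sx_def by (intro Max_in) auto
    have n1: "1 \<le> n" and xn: "x n > 0" using nS supp nn unfolding Sx_def by (auto simp: order_le_less)
    have beyond: "\<forall>j. n < j \<longrightarrow> x j = 0"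
    proof (intro allI impI)
      fix j assume j: "n < j"
      show "x j = 0"
      proof (rule ccontr)
        assume "x j \<noteq> 0"
        then have "j \<le> n" using fin unfolding n_def Sx_def by (intro Max_ge) auto
        then show False using j by simp
      qed
    qed
    define i where "i = ik n"
    define K where "K = {k. 1 \<le> k \<and> ik k = i}"
    define sx where "sx = sig_plus a1 a2 x"
    have finI: "finite (sx ` K)" unfolding sx_def K_def by (rule sig_plus_img_fin[OF fin])
    define M where "M = sigmax_plus a1 a2 i x"
    have M_def': "M = Max (sx ` K)" unfolding M_def sigmax_plus_def sx_def K_def ..
    have nK: "n \<in> K" using n1 unfolding K_def i_def by auto
    have sxn: "sx n = x n" unfolding sx_def
    proof -
      have "{j. n < j \<and> x j \<noteq> 0} = {}" using beyond by auto
      then show "sig_plus a1 a2 x n = x n" unfolding sig_plus_def by simp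
    qed
    have leM: "\<And>k. k \<in> K \<Longrightarrow> sx k \<le> M" unfolding M_def' using finI by (intro Max_ge) auto
    have Mpos: "M > 0" using leM[OF nK] sxn xn by simp
    have MK: "M \<in> sx ` K" unfolding M_def' using finI nK by (intro Max_in) auto
    define T where "T = {k \<in> K. sx k = M}"
    have Tsub: "T \<subseteq> {1..n}"
    proof
      fix k assume k: "k \<in> T"
      have "k \<le> n"
      proof (rule ccontr)
        assume "\<not> k \<le> n"
        then have "sx k = 0" unfolding sx_def by (intro sig_plus_zero) (use beyond in auto)
        then show False using k Mpos unfolding T_def by auto
      qed
      then show "k \<in> {1..n}" using k unfolding T_def K_def by auto
    qed
    have finT: "finite T" using Tsub finite_subset by blast
    have Tne: "T \<noteq> {}" using MK unfolding T_def by auto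
    define m where "m = Max T"
    have mT: "m \<in> T" unfolding m_def using finT Tne by (rule Max_in)
    have m1: "1 \<le> m" and ikm: "ik m = i" and sxm: "sx m = M" using mT unfolding T_def K_def by auto
    have above: "\<And>k. k \<in> K \<Longrightarrow> m < k \<Longrightarrow> sx k < M"
    proof -
      fix k assume k: "k \<in> K" "m < k"
      have "sx k \<noteq> M"
      proof
        assume "sx k = M" then have "k \<in> T" using k unfolding T_def by auto
        then have "k \<le> m" unfolding m_def using finT by (simp add: Max_ge)
        then show False using k by simp
      qed
      then show "sx k < M" using leM[OF k(1)] by simp
    qed
    have m2K: "m + 2 \<in> K" using m1 ikm unfolding K_def by auto
    have sx2: "sx (m+2) \<le> M - 1" using above[OF m2K] by simp
    define c where "c = cartan a1 a2 (ik m) (ik (m+1))"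
    have rec: "sx m = x m + c * x (m+1) + x (m+2) + sx (m+2)"
      unfolding sx_def c_def by (rule sig_plus_rec[OF fin])
    have ineq: "x m + c * x (m+1) + x (m+2) \<ge> 1" using rec sx2 sxm by simp
    have gid: "gam a1 a2 m * (- real_of_int c - gam a1 a2 (m+1)) = 1" "gam a1 a2 m > 0"
      unfolding c_def using gam_id[OF ab, of m "m+1"] ik_plus1[of m] by auto
    have g2: "real_of_int (x (m+2)) \<le> gam a1 a2 (m+1) * x (m+1)" using gc m1
      by (metis add.assoc one_add_one add_increasing2 zero_le_one)
    have h1: "real_of_int (x m - 1) \<ge> (- real_of_int c - gam a1 a2 (m+1)) * x (m+1)"
    proof -
      have "real_of_int (x m - 1) \<ge> - real_of_int c * x (m+1) - x (m+2)"
        proof -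
        have "real_of_int 1 \<le> real_of_int (x m + c * x (m+1) + x (m+2))" using ineq by (simp only: of_int_le_iff)
        then show ?thesis by simp
      qed
      then show ?thesis using g2 by (simp add: algebra_simps)
    qed
    have h2: "gam a1 a2 m * real_of_int (x m - 1) \<ge> x (m+1)"
    proof -
      have "gam a1 a2 m * real_of_int (x m - 1) \<ge> gam a1 a2 m * ((- real_of_int c - gam a1 a2 (m+1)) * x (m+1))"
        using h1 gid(2) by (intro mult_left_mono) auto
      also have "gam a1 a2 m * ((- real_of_int c - gam a1 a2 (m+1)) * x (m+1)) = x (m+1)"
        using gid(1) by (simp add: mult.assoc[symmetric])
      finally show ?thesis .
    qed
    have xm1: "x m \<ge> 1"
    proof -
      have "gam a1 a2 m * real_of_int (x m - 1) \<ge> 0" using h2 nn[rule_format, of "m+1"]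
        by (meson of_int_0_le_iff order_trans)
      then have "real_of_int (x m - 1) \<ge> 0" using gid(2) by (simp add: zero_le_mult_iff)
      then show ?thesis by simp
    qed
    define y where "y = x(m := x m + (-1))"
    have mS: "m \<in> Sx" using xm1 unfolding Sx_def by auto
    have suppy: "{j. y j \<noteq> 0} \<subseteq> Sx" using xm1 unfolding y_def Sx_def by auto
    have finy: "finite {j. y j \<noteq> 0}" using suppy fin finite_subset unfolding Sx_def by blast
    have supy: "\<forall>j. y j \<noteq> 0 \<longrightarrow> 1 \<le> j" using suppy supp unfolding Sx_def by auto
    have nny: "\<forall>j. 0 \<le> y j" using nn xm1 unfolding y_def by auto
    have gcy: "\<forall>k\<ge>1. real_of_int (y (k+1)) \<le> gam a1 a2 k * y k"
    proof (intro allI impI)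
      fix k :: int assume k: "1 \<le> k"
      show "real_of_int (y (k+1)) \<le> gam a1 a2 k * y k"
      proof (cases "k = m")
        case True
        then show ?thesis using h2 unfolding y_def by simp
      next
        case False
        note kne = False
        show ?thesis
        proof (cases "k + 1 = m")
          case True
          have "real_of_int (y (k+1)) \<le> x (k+1)" using True unfolding y_def by simp
          also have "\<dots> \<le> gam a1 a2 k * x k" using gc k by auto
          finally show ?thesis using kne unfolding y_def by simp
        next
          case False
          then show ?thesis using kne gc k unfolding y_def by simp
        qed
      qed
    qed
    have sumy: "sum y {j. y j \<noteq> 0} = sum x Sx - 1"
    proof -
      have "sum y {j. y j \<noteq> 0} = sum y Sx"
        using suppy fin unfolding Sx_def by (intro sum.mono_neutral_left) auto
      also have "sum y Sx = sum x Sx + (\<Sum>j\<in>Sx. if j = m then -1 else 0)"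
        unfolding y_def by (subst sum.distrib[symmetric], rule sum.cong) auto
      also have "(\<Sum>j\<in>Sx. if j = m then -1 else (0::int)) = -1"
        using fin mS unfolding Sx_def by (subst sum.delta) auto
      finally show ?thesis by simp
    qed
    have sumy0: "sum y {j. y j \<noteq> 0} \<ge> 0" using nny by (intro sum_nonneg) auto
    have IH: "y \<in> ImPsi_plus a1 a2"
      by (rule less.hyps[OF _ finy supy nny gcy]) (use sumy sumy0 in \<open>simp add: Sx_def\<close>)
    define sy where "sy = sig_plus a1 a2 y"
    have sy: "\<And>k. k \<in> K \<Longrightarrow> sy k = sx k + (if k = m then -1 else if k < m then -2 else 0)"
    proof -
      fix k assume k: "k \<in> K"
      have "sy k = sx k + (if k = m then -1 else if k < m then cartan a1 a2 (ik k) (ik m) * (-1) else 0)"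
        unfolding sy_def sx_def y_def by (rule sig_plus_upd[OF fin])
      moreover have "ik k = ik m" using k ikm unfolding K_def by auto
      ultimately show "sy k = sx k + (if k = m then -1 else if k < m then -2 else 0)" by simp
    qed
    have syle: "\<And>k. k \<in> K \<Longrightarrow> sy k \<le> M - 1"
    proof -
      fix k assume k: "k \<in> K"
      show "sy k \<le> M - 1"
        using sy[OF k] leM[OF k] above[OF k] sxm by (cases "m < k") (auto split: if_splits)
    qed
    have mK: "m \<in> K" using mT unfolding T_def by auto
    have sym: "sy m = M - 1" using sy[OF mK] sxm by simp
    have finIy: "finite (sy ` K)" unfolding sy_def K_def by (rule sig_plus_img_fin[OF finy])
    have My: "sigmax_plus a1 a2 i y = M - 1"
      unfolding sigmax_plus_def sy_def[symmetric] K_def[symmetric]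
    proof (rule Max_eqI[OF finIy])
      show "M - 1 \<in> sy ` K" using sym mK by (metis image_eqI)
    qed (use syle in auto)
    have least: "(LEAST k. 1 \<le> k \<and> ik k = i \<and> sig_plus a1 a2 y k = sigmax_plus a1 a2 i y) = m"
    proof (rule Least_equality)
      show "1 \<le> m \<and> ik m = i \<and> sig_plus a1 a2 y m = sigmax_plus a1 a2 i y"
        using m1 ikm sym My unfolding sy_def by simp
    next
      fix k assume k: "1 \<le> k \<and> ik k = i \<and> sig_plus a1 a2 y k = sigmax_plus a1 a2 i y"
      then have kK: "k \<in> K" unfolding K_def by auto
      show "m \<le> k"
      proof (rule ccontr)
        assume "\<not> m \<le> k"
        then have "sy k = sx k - 2" using sy[OF kK] by simp
        then show False using leM[OF kK] k My unfolding sy_def by simp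
      qed
    qed
    have "ftil_plus a1 a2 i y = x"
      unfolding ftil_plus_def Let_def least unfolding y_def by auto
    moreover have "i \<in> {1,2}" using ik_cases[of n] unfolding i_def by auto
    ultimately show ?thesis using ImPsi_plus.step[OF IH] by metis
  qed
qed


lemma sig_minus_fin:
  assumes "finite S" "{j. x j \<noteq> 0} \<subseteq> S"
  shows "sig_minus a1 a2 x k = - x k - (\<Sum>j\<in>{j\<in>S. j < k}. cartan a1 a2 (ik k) (ik j) * x j)"
  unfolding sig_minus_def
  by (rule arg_cong[where f="\<lambda>s. - x k - s"], rule sum.mono_neutral_left) (use assms in auto)

lemma sig_minus_rec:
  assumes "finite {j. x j \<noteq> 0}"
  shows "sig_minus a1 a2 x k = - x k - cartan a1 a2 (ik k) (ik (k-1)) * x (k-1) - x (k-2) + sig_minus a1 a2 x (k-2)"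
proof -
  define S where "S = {j. x j \<noteq> 0} \<union> {k-1, k-2}"
  have fS: "finite S" "{j. x j \<noteq> 0} \<subseteq> S" using assms by (auto simp: S_def)
  have split: "{j\<in>S. j < k} = {k-1, k-2} \<union> {j\<in>S. j < k-2}" by (auto simp: S_def)
  have "(\<Sum>j\<in>{j\<in>S. j < k}. cartan a1 a2 (ik k) (ik j) * x j)
     = (\<Sum>j\<in>{k-1, k-2}. cartan a1 a2 (ik k) (ik j) * x j) + (\<Sum>j\<in>{j\<in>S. j < k-2}. cartan a1 a2 (ik k) (ik j) * x j)"
    unfolding split by (rule sum.union_disjoint) (use fS in auto)
  also have "(\<Sum>j\<in>{k-1, k-2}. cartan a1 a2 (ik k) (ik j) * x j) = cartan a1 a2 (ik k) (ik (k-1)) * x (k-1) + 2 * x (k-2)"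
    by simp
  finally show ?thesis
    unfolding sig_minus_fin[OF fS, of a1 a2 k] sig_minus_fin[OF fS, of a1 a2 "k-2"] by simp
qed

lemma sig_minus_upd:
  assumes "finite {j. x j \<noteq> 0}"
  shows "sig_minus a1 a2 (x(m := x m + d)) k = sig_minus a1 a2 x k -
    (if k = m then d else if m < k then cartan a1 a2 (ik k) (ik m) * d else 0)"
proof -
  define S where "S = {j. x j \<noteq> 0} \<union> {m}"
  have fS: "finite S" "{j. x j \<noteq> 0} \<subseteq> S" using assms by (auto simp: S_def)
  have fS': "{j. (x(m := x m + d)) j \<noteq> 0} \<subseteq> S" by (auto simp: S_def)
  have eq: "(\<Sum>j\<in>{j\<in>S. j < k}. cartan a1 a2 (ik k) (ik j) * (x(m := x m + d)) j)
    = (\<Sum>j\<in>{j\<in>S. j < k}. cartan a1 a2 (ik k) (ik j) * x j)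
      + (\<Sum>j\<in>{j\<in>S. j < k}. if j = m then cartan a1 a2 (ik k) (ik m) * d else 0)"
    by (subst sum.distrib[symmetric], rule sum.cong) (auto simp: algebra_simps)
  have "(\<Sum>j\<in>{j\<in>S. j < k}. if j = m then cartan a1 a2 (ik k) (ik m) * d else 0)
      = (if m < k then cartan a1 a2 (ik k) (ik m) * d else 0)"
    using fS by (subst sum.delta) (auto simp: S_def)
  then show ?thesis
    unfolding sig_minus_fin[OF fS(1) fS', of a1 a2 k] sig_minus_fin[OF fS, of a1 a2 k] eq
    by auto
qed

lemma sig_minus_zero:
  assumes "\<forall>j. j \<le> k \<longrightarrow> x j = 0"
  shows "sig_minus a1 a2 x k = 0"
proof -
  have "{j. j < k \<and> x j \<noteq> 0} = {}" using assms by auto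
  then show ?thesis using assms unfolding sig_minus_def by simp
qed

lemma sig_minus_img_fin:
  assumes "finite {j. x j \<noteq> 0}"
  shows "finite (sig_minus a1 a2 x ` {k. k \<le> 0 \<and> ik k = i})"
proof -
  define N where "N = Min ({j. x j \<noteq> 0} \<union> {0})"
  have N: "\<forall>j. j < N \<longrightarrow> x j = 0"
  proof (intro allI impI)
    fix j assume j: "j < N"
    show "x j = 0"
    proof (rule ccontr)
      assume "x j \<noteq> 0"
      then have "N \<le> j" using assms unfolding N_def by (intro Min_le) auto
      then show False using j by simp
    qed
  qed
  have "sig_minus a1 a2 x ` {k. k \<le> 0 \<and> ik k = i} \<subseteq> sig_minus a1 a2 x ` {N..0} \<union> {0}"
  proof
    fix s assume "s \<in> sig_minus a1 a2 x ` {k. k \<le> 0 \<and> ik k = i}"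
    then obtain k where k: "k \<le> 0" "s = sig_minus a1 a2 x k" by auto
    show "s \<in> sig_minus a1 a2 x ` {N..0} \<union> {0}"
    proof (cases "N \<le> k")
      case True then show ?thesis using k by auto
    next
      case False then have "sig_minus a1 a2 x k = 0" using N by (intro sig_minus_zero) auto
      then show ?thesis using k by auto
    qed
  qed
  then show ?thesis by (rule finite_subset) auto
qed

lemma minus_main:
  assumes ab: "1 \<le> a1" "1 \<le> a2" "a1*a2 > 4"
  shows "finite {j. x j \<noteq> 0} \<Longrightarrow> (\<forall>j. x j \<noteq> 0 \<longrightarrow> j \<le> 0) \<Longrightarrow> (\<forall>j. x j \<le> 0) \<Longrightarrow>
    (\<forall>k\<le>0. gam a1 a2 k * x k \<le> real_of_int (x (k-1))) \<Longrightarrow> x \<in> ImPsi_minus a1 a2"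
proof (induction "nat (- sum x {j. x j \<noteq> 0})" arbitrary: x rule: less_induct)
  case less
  note fin = less.prems(1) and supp = less.prems(2) and nn = less.prems(3) and gc = less.prems(4)
  define Sx where "Sx = {j. x j \<noteq> 0}"
  show ?case
  proof (cases "Sx = {}")
    case True
    then have "x = (\<lambda>_. 0)" unfolding Sx_def by auto
    then show ?thesis using ImPsi_minus.zero by simp
  next
    case False
    define n where "n = Min Sx"
    have nS: "n \<in> Sx" using False fin unfolding n_def Sx_def by (intro Min_in) auto
    have n1: "n \<le> 0" and xn: "x n < 0" using nS supp nn unfolding Sx_def by (auto simp: order_le_less)
    have beyond: "\<forall>j. j < n \<longrightarrow> x j = 0"
    proof (intro allI impI)
      fix j assume j: "j < n"
      show "x j = 0"
      proof (rule ccontr)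
        assume "x j \<noteq> 0"
        then have "n \<le> j" using fin unfolding n_def Sx_def by (intro Min_le) auto
        then show False using j by simp
      qed
    qed
    define i where "i = ik n"
    define K where "K = {k. k \<le> 0 \<and> ik k = i}"
    define sx where "sx = sig_minus a1 a2 x"
    have finI: "finite (sx ` K)" unfolding sx_def K_def by (rule sig_minus_img_fin[OF fin])
    define M where "M = sigmax_minus a1 a2 i x"
    have M_def': "M = Max (sx ` K)" unfolding M_def sigmax_minus_def sx_def K_def ..
    have nK: "n \<in> K" using n1 unfolding K_def i_def by auto
    have sxn: "sx n = - x n" unfolding sx_def
    proof -
      have "{j. j < n \<and> x j \<noteq> 0} = {}" using beyond by auto
      then show "sig_minus a1 a2 x n = - x n" unfolding sig_minus_def by simp
    qed
    have leM: "\<And>k. k \<in> K \<Longrightarrow> sx k \<le> M" unfolding M_def' using finI by (intro Max_ge) auto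
    have Mpos: "M > 0" using leM[OF nK] sxn xn by simp
    have MK: "M \<in> sx ` K" unfolding M_def' using finI nK by (intro Max_in) auto
    define T where "T = {k \<in> K. sx k = M}"
    have Tsub: "T \<subseteq> {n..0}"
    proof
      fix k assume k: "k \<in> T"
      have "n \<le> k"
      proof (rule ccontr)
        assume "\<not> n \<le> k"
        then have "sx k = 0" unfolding sx_def by (intro sig_minus_zero) (use beyond in auto)
        then show False using k Mpos unfolding T_def by auto
      qed
      then show "k \<in> {n..0}" using k unfolding T_def K_def by auto
    qed
    have finT: "finite T" using Tsub finite_subset by blast
    have Tne: "T \<noteq> {}" using MK unfolding T_def by auto
    define m where "m = Min T"
    have mT: "m \<in> T" unfolding m_def using finT Tne by (rule Min_in)
    have m1: "m \<le> 0" and ikm: "ik m = i" and sxm: "sx m = M" using mT unfolding T_def K_def by auto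
    have above: "\<And>k. k \<in> K \<Longrightarrow> k < m \<Longrightarrow> sx k < M"
    proof -
      fix k assume k: "k \<in> K" "k < m"
      have "sx k \<noteq> M"
      proof
        assume "sx k = M" then have "k \<in> T" using k unfolding T_def by auto
        then have "m \<le> k" unfolding m_def using finT by (simp add: Min_le)
        then show False using k by simp
      qed
      then show "sx k < M" using leM[OF k(1)] by simp
    qed
    have m2K: "m - 2 \<in> K" using m1 ikm unfolding K_def by auto
    have sx2: "sx (m-2) \<le> M - 1" using above[OF m2K] by simp
    define c where "c = cartan a1 a2 (ik m) (ik (m-1))"
    have rec: "sx m = - x m - c * x (m-1) - x (m-2) + sx (m-2)"
      unfolding sx_def c_def by (rule sig_minus_rec[OF fin])
    have ineq: "- x m - c * x (m-1) - x (m-2) \<ge> 1" using rec sx2 sxm by simp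
    have gid: "gam a1 a2 m * (- real_of_int c - gam a1 a2 (m-1)) = 1" "gam a1 a2 m > 0"
      unfolding c_def using gam_id[OF ab, of m "m-1"] ik_minus1[of m] by auto
    have g2: "gam a1 a2 (m-1) * x (m-1) \<le> real_of_int (x (m-2))" 
    proof -
      have "m - 1 \<le> 0" using m1 by simp
      then have "gam a1 a2 (m-1) * x (m-1) \<le> real_of_int (x (m - 1 - 1))" using gc by blast
      moreover have "m - 1 - 1 = m - (2::int)" by simp
      ultimately show ?thesis by simp
    qed
    have h1: "real_of_int (x m + 1) \<le> (- real_of_int c - gam a1 a2 (m-1)) * x (m-1)"
    proof -
      have "real_of_int (x m + 1) \<le> - real_of_int c * x (m-1) - x (m-2)"
      proof -
        have "real_of_int 1 \<le> real_of_int (- x m - c * x (m-1) - x (m-2))" using ineq by (simp only: of_int_le_iff)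
        then show ?thesis by simp
      qed
      then show ?thesis using g2 by (simp add: algebra_simps)
    qed
    have h2: "gam a1 a2 m * real_of_int (x m + 1) \<le> x (m-1)"
    proof -
      have "gam a1 a2 m * real_of_int (x m + 1) \<le> gam a1 a2 m * ((- real_of_int c - gam a1 a2 (m-1)) * x (m-1))"
        using h1 gid(2) by (intro mult_left_mono) auto
      also have "gam a1 a2 m * ((- real_of_int c - gam a1 a2 (m-1)) * x (m-1)) = x (m-1)"
        using gid(1) by (simp add: mult.assoc[symmetric])
      finally show ?thesis .
    qed
    have xm1: "x m \<le> -1"
    proof -
      have "gam a1 a2 m * real_of_int (x m + 1) \<le> 0" using h2 nn[rule_format, of "m-1"]
        by (meson of_int_le_0_iff order_trans)
      then have "real_of_int (x m + 1) \<le> 0" using gid(2) by (simp add: mult_le_0_iff)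
      then show ?thesis by simp
    qed
    define y where "y = x(m := x m + 1)"
    have mS: "m \<in> Sx" using xm1 unfolding Sx_def by auto
    have suppy: "{j. y j \<noteq> 0} \<subseteq> Sx" using xm1 unfolding y_def Sx_def by auto
    have finy: "finite {j. y j \<noteq> 0}" using suppy fin finite_subset unfolding Sx_def by blast
    have supy: "\<forall>j. y j \<noteq> 0 \<longrightarrow> j \<le> 0" using suppy supp unfolding Sx_def by auto
    have nny: "\<forall>j. y j \<le> 0" using nn xm1 unfolding y_def by auto
    have gcy: "\<forall>k\<le>0. gam a1 a2 k * y k \<le> real_of_int (y (k-1))"
    proof (intro allI impI)
      fix k :: int assume k: "k \<le> 0"
      show "gam a1 a2 k * y k \<le> real_of_int (y (k-1))"
      proof (cases "k = m")
        case True
        then show ?thesis using h2 unfolding y_def by simp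
      next
        case False
        note kne = False
        show ?thesis
        proof (cases "k - 1 = m")
          case True
          have "gam a1 a2 k * y k = gam a1 a2 k * x k" using kne unfolding y_def by simp
          also have "\<dots> \<le> x (k-1)" using gc k by auto
          also have "\<dots> \<le> y (k-1)" using True unfolding y_def by simp
          finally show ?thesis .
        next
          case False
          then show ?thesis using kne gc k unfolding y_def by simp
        qed
      qed
    qed
    have sumy: "sum y {j. y j \<noteq> 0} = sum x Sx + 1"
    proof -
      have "sum y {j. y j \<noteq> 0} = sum y Sx"
        using suppy fin unfolding Sx_def by (intro sum.mono_neutral_left) auto
      also have "sum y Sx = sum x Sx + (\<Sum>j\<in>Sx. if j = m then 1 else 0)"
        unfolding y_def by (subst sum.distrib[symmetric], rule sum.cong) auto
      also have "(\<Sum>j\<in>Sx. if j = m then 1 else (0::int)) = 1"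
        using fin mS unfolding Sx_def by (subst sum.delta) auto
      finally show ?thesis by simp
    qed
    have sumy0: "sum y {j. y j \<noteq> 0} \<le> 0" using nny by (intro sum_nonpos) auto
    have IH: "y \<in> ImPsi_minus a1 a2"
      by (rule less.hyps[OF _ finy supy nny gcy]) (use sumy sumy0 in \<open>simp add: Sx_def\<close>)
    define sy where "sy = sig_minus a1 a2 y"
    have sy: "\<And>k. k \<in> K \<Longrightarrow> sy k = sx k - (if k = m then 1 else if m < k then 2 else 0)"
    proof -
      fix k assume k: "k \<in> K"
      have "sy k = sx k - (if k = m then 1 else if m < k then cartan a1 a2 (ik k) (ik m) * 1 else 0)"
        unfolding sy_def sx_def y_def by (rule sig_minus_upd[OF fin])
      moreover have "ik k = ik m" using k ikm unfolding K_def by auto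
      ultimately show "sy k = sx k - (if k = m then 1 else if m < k then 2 else 0)" by simp
    qed
    have syle: "\<And>k. k \<in> K \<Longrightarrow> sy k \<le> M - 1"
    proof -
      fix k assume k: "k \<in> K"
      show "sy k \<le> M - 1"
        using sy[OF k] leM[OF k] above[OF k] sxm by (cases "k < m") (auto split: if_splits)
    qed
    have mK: "m \<in> K" using mT unfolding T_def by auto
    have sym: "sy m = M - 1" using sy[OF mK] sxm by simp
    have finIy: "finite (sy ` K)" unfolding sy_def K_def by (rule sig_minus_img_fin[OF finy])
    have My: "sigmax_minus a1 a2 i y = M - 1"
      unfolding sigmax_minus_def sy_def[symmetric] K_def[symmetric]
    proof (rule Max_eqI[OF finIy])
      show "M - 1 \<in> sy ` K" using sym mK by (metis image_eqI)
    qed (use syle in auto)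
    have greatest: "(GREATEST k. k \<le> 0 \<and> ik k = i \<and> sig_minus a1 a2 y k = sigmax_minus a1 a2 i y) = m"
    proof (rule Greatest_equality)
      show "m \<le> 0 \<and> ik m = i \<and> sig_minus a1 a2 y m = sigmax_minus a1 a2 i y"
        using m1 ikm sym My unfolding sy_def by simp
    next
      fix k assume k: "k \<le> 0 \<and> ik k = i \<and> sig_minus a1 a2 y k = sigmax_minus a1 a2 i y"
      then have kK: "k \<in> K" unfolding K_def by auto
      show "k \<le> m"
      proof (rule ccontr)
        assume "\<not> k \<le> m"
        then have "sy k = sx k - 2" using sy[OF kK] by simp
        then show False using leM[OF kK] k My unfolding sy_def by simp
      qed
    qed
    have "etil_minus a1 a2 i y = x"
      unfolding etil_minus_def Let_def greatest unfolding y_def by auto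
    moreover have "i \<in> {1,2}" using ik_cases[of n] unfolding i_def by auto
    ultimately show ?thesis using ImPsi_minus.step[OF IH] by metis
  qed
qed


theorem lemma4p8:
  fixes a1 a2 k1 k2 :: int
  assumes "1 \<le> a1" and "1 \<le> a2" and "a1 * a2 > 4"
    and "0 < k1" and "0 < k2"
    and "2 \<le> a1 \<and> 2 \<le> a2 \<longrightarrow>
           (k2 \<le> k1 \<and> k1 < (a1 - 1) * k2) \<or> (k1 < k2 \<and> k2 \<le> (a2 - 1) * k1)"
    and "a1 = 1 \<longrightarrow> 2 * k1 \<le> k2 \<and> k2 \<le> (a2 - 2) * k1"
    and "a2 = 1 \<longrightarrow> 2 * k2 \<le> k1 \<and> k1 \<le> (a1 - 2) * k2"
  shows "Sigma_lam a1 a2 k1 k2 \<subseteq> ImPsi_lam a1 a2"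
proof
  fix x assume x: "x \<in> Sigma_lam a1 a2 k1 k2"
  have xZ: "x \<in> Zlam" and xX: "\<forall>\<phi>\<in>Xi a1 a2 k1 k2. 0 \<le> \<phi> x" using x unfolding Sigma_lam_def by auto
  have fin: "finite {k. x k \<noteq> 0}" and pos: "\<forall>k\<ge>1. 0 \<le> x k" and neg: "\<forall>k\<le>0. x k \<le> 0"
    using xZ unfolding Zlam_def by auto
  have condp: "\<forall>k\<ge>1. 0 \<le> gam a1 a2 k * x k - x (k + 1)"
  proof (intro allI impI)
    fix k :: int assume k: "1 \<le> k"
    have "(\<lambda>x. gam a1 a2 k * x k - x (k + 1)) \<in> Xi a1 a2 k1 k2"
      unfolding Xi_def Let_def using k by blast
    then show "0 \<le> gam a1 a2 k * x k - x (k + 1)" using xX by fastforce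
  qed
  have condm: "\<forall>k\<le>0. 0 \<le> x (k - 1) - gam a1 a2 k * x k"
  proof (intro allI impI)
    fix k :: int assume k: "k \<le> 0"
    have "(\<lambda>x. x (k - 1) - gam a1 a2 k * x k) \<in> Xi a1 a2 k1 k2"
      unfolding Xi_def Let_def using k by blast
    then show "0 \<le> x (k - 1) - gam a1 a2 k * x k" using xX by fastforce
  qed
  define xp where "xp = (\<lambda>k. if 1 \<le> k then x k else 0)"
  define xm where "xm = (\<lambda>k. if k \<le> 0 then x k else 0)"
  have "xp \<in> ImPsi_plus a1 a2"
  proof (rule plus_main[OF assms(1-3)])
    show "finite {j. xp j \<noteq> 0}" by (rule finite_subset[OF _ fin]) (auto simp: xp_def)
    show "\<forall>j. xp j \<noteq> 0 \<longrightarrow> 1 \<le> j" by (auto simp: xp_def split: if_splits)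
    show "\<forall>j. 0 \<le> xp j" using pos by (auto simp: xp_def)
    show "\<forall>k\<ge>1. real_of_int (xp (k + 1)) \<le> gam a1 a2 k * xp k" using condp by (auto simp: xp_def)
  qed
  moreover have "xm \<in> ImPsi_minus a1 a2"
  proof (rule minus_main[OF assms(1-3)])
    show "finite {j. xm j \<noteq> 0}" by (rule finite_subset[OF _ fin]) (auto simp: xm_def)
    show "\<forall>j. xm j \<noteq> 0 \<longrightarrow> j \<le> 0" by (auto simp: xm_def split: if_splits)
    show "\<forall>j. xm j \<le> 0" using neg by (auto simp: xm_def)
    show "\<forall>k\<le>0. gam a1 a2 k * xm k \<le> real_of_int (xm (k - 1))" using condm by (auto simp: xm_def)
  qed
  ultimately show "x \<in> ImPsi_lam a1 a2" using xZ unfolding ImPsi_lam_def xp_def xm_def by auto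
qed

end
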